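(* The functions $S=\sin^2\phi$, $C=\cos^2\phi$ and $D=\cos^2\psi$ are not elliptic; that is, none of them admits an extension from a small disc about $0$ to an elliptic (doubly periodic meromorphic) function on $\mathbb{C}$.
   Context: Let $0<\kappa<1$ and $\lambda=\sqrt{1-\kappa^2}\in(0,1)$. Let $F(\tfrac16,\tfrac56;\tfrac12;\cdot)$ denote the Gauss hypergeometric function. Define $u$ as a function of $\phi$ near $0$ by $u=\int_0^{\sin\phi}F(\tfrac16,\tfrac56;\tfrac12;\kappa^2t^2)\,\frac{dt}{\sqrt{1-t^2}}$; near the origin (fixing $0$) this inverts to a holomorphic function $u\mapsto\phi(u)$ with $\phi(0)=0$. Let $\psi$ be the holomorphic function near $0$ with $\psi(0)=0$ and $\sin\psi=\kappa\sin\phi$. All functions are regarded as functions of $u$ on a small disc about $0$. *)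

theory Defs
  imports "HOL-Complex_Analysis.Complex_Analysis"
begin

text \<open>Gauss hypergeometric series F(a,b;c;z) (as a power series; converges for norm z < 1).\<close>
definition gauss_F :: "complex \<Rightarrow> complex \<Rightarrow> complex \<Rightarrow> complex \<Rightarrow> complex" where
  "gauss_F a b c z = (\<Sum>n. (pochhammer a n * pochhammer b n / (pochhammer c n * fact n)) * z ^ n)"

definition u_of_phi :: "real \<Rightarrow> complex \<Rightarrow> complex" where
  "u_of_phi \<kappa> \<phi> = contour_integral (linepath 0 (sin \<phi>))
     (\<lambda>t. gauss_F (1/6) (5/6) (1/2) ((complex_of_real \<kappa>)\<^sup>2 * t\<^sup>2) / csqrt (1 - t\<^sup>2))"

definition elliptic :: "(complex \<Rightarrow> complex) \<Rightarrow> bool" where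
  "elliptic f \<longleftrightarrow> f meromorphic_on UNIV \<and>
     (\<exists>\<omega>1 \<omega>2. \<omega>1 \<noteq> 0 \<and> \<omega>2 \<noteq> 0 \<and> Im (\<omega>2 / \<omega>1) \<noteq> 0 \<and>
        (\<forall>z. f (z + \<omega>1) = f z) \<and> (\<forall>z. f (z + \<omega>2) = f z))"

end

theory Submission
  imports Defs
begin

lemma cubic_inverse:
  obtains \<rho> w where "\<rho> > 0" "w holomorphic_on ball 0 \<rho>" "w 0 = 1"
    "\<And>y. y \<in> ball 0 \<rho> \<Longrightarrow> 4*(w y)^3 - 3*w y = 1 - 2*y"
    "\<And>y. y \<in> ball 0 \<rho> \<Longrightarrow> w y \<in> ball 1 (1/10)"
    "\<And>y. y \<in> ball 0 \<rho> \<Longrightarrow> (w has_field_derivative 2/(3 - 12*(w y)^2)) (at y)"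
proof -
  define p :: "complex \<Rightarrow> complex" where "p = (\<lambda>v. (1 + 3 * v - 4 * v^3)/2)"
  have dp: "(p has_field_derivative (3 - 12 * v^2)/2) (at v)" for v
    unfolding p_def by (auto intro!: derivative_eq_intros simp: field_simps)
  have hp: "p holomorphic_on UNIV" unfolding p_def by (intro holomorphic_intros) auto
  have d1: "deriv p 1 \<noteq> 0" using DERIV_imp_deriv[OF dp[of 1]] by simp
  have hpb: "p holomorphic_on ball 1 (1/10)" using hp holomorphic_on_subset by blast
  have c1: "(1::complex) \<in> ball 1 (1/10)" by simp
  obtain r where r: "r > 0" "ball (1::complex) r \<subseteq> ball 1 (1/10)" "inj_on p (ball 1 r)"
    by (rule has_complex_derivative_locally_injective[OF hpb c1 open_ball d1])
  have hp': "p holomorphic_on ball 1 r" using hp holomorphic_on_subset by blast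
  obtain g where g: "g holomorphic_on (p ` ball 1 r)"
    "\<And>z. z \<in> ball 1 r \<Longrightarrow> deriv p z * deriv g (p z) = 1"
    "\<And>z. z \<in> ball 1 r \<Longrightarrow> g(p z) = z"
    using holomorphic_has_inverse[OF hp' _ r(3)] by auto
  have op: "open (p ` ball 1 r)" by (rule open_mapping_thm3[OF hp' _ r(3)]) auto
  have "p 1 = 0" unfolding p_def by simp
  hence "0 \<in> p ` ball 1 r" using r(1) by force
  then obtain \<rho> where \<rho>: "\<rho> > 0" "ball 0 \<rho> \<subseteq> p ` ball 1 r"
    using op openE by blast
  show ?thesis
  proof (rule that[of \<rho> g])
    show "g holomorphic_on ball 0 \<rho>" using g(1) \<rho>(2) holomorphic_on_subset by blast
    show "g 0 = 1" using g(3)[of 1] \<open>p 1 = 0\<close> r(1) by simp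
  next
    fix y :: complex assume y: "y \<in> ball 0 \<rho>"
    then obtain v where v: "v \<in> ball 1 r" "y = p v" using \<rho>(2) by blast
    have gy: "g y = v" using g(3) v by simp
    show "4*(g y)^3 - 3*g y = 1 - 2*y" unfolding gy by (simp add: v(2) p_def field_simps)
    show "g y \<in> ball 1 (1/10)" using gy v r(2) by blast
    have dpv: "deriv p v = (3 - 12 * v^2)/2" using DERIV_imp_deriv[OF dp] .
    have e: "deriv p v * deriv g y = 1" using g(2)[OF v(1)] v(2) by simp
    have nz: "deriv p v \<noteq> 0" using e by auto
    have "deriv g y = 1 / deriv p v" using e nz by (simp add: eq_divide_eq mult.commute)
    hence dg: "deriv g y = 2/(3 - 12 * v^2)" by (simp add: dpv)
    have "(g has_field_derivative deriv g y) (at y)"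
      using holomorphic_derivI[OF g(1) op] y \<rho>(2) by blast
    thus "(g has_field_derivative 2/(3 - 12*(g y)^2)) (at y)" using dg gy by simp
  qed (use \<rho> in auto)
qed

lemma ode_alg:
  fixes W S y :: complex
  assumes S2: "S^2 = 1 - y" and Snz: "S \<noteq> 0" and D: "3 - 12*W^2 \<noteq> 0"
    and cub: "4*W^3 - 3*W = 1 - 2*y"
  shows "y*(1-y)*((96*W/(3-12*W^2)^3)/S + (2/(3-12*W^2))/S^3 + 3*W/(4*S^5))
         + (1/2-2*y)*((2/(3-12*W^2))/S + W/(2*S^3)) - 5/36*(W/S) = 0"
proof -
  define m where "m = 1 - y"
  define D where "D = 3 - 12*W^2"
  have m: "m \<noteq> 0" using S2 Snz unfolding m_def by auto
  have S3: "S^3 = S*m" using S2 unfolding m_def by (simp add: power3_eq_cube power2_eq_square)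
  have S5: "S^5 = S*m^2" using S2 unfolding m_def
    by (simp add: power2_eq_square eval_nat_numeral)
  have y: "y = 1 - m" unfolding m_def by simp
  have mW: "2*m = 1 - 3*W + 4*W^3" using cub unfolding m_def by (simp add: algebra_simps)
  have W4: "4*W^2 - 1 \<noteq> 0" using D by (auto simp: algebra_simps)
  have Dn: "D \<noteq> 0" using D D_def by simp
  have e1: "(1-m)*m = (1-W^2)*(4*W^2-1)^2/4"
  proof -
    have "4*((1-m)*m) = (2 - 2*m)*(2*m)" by (simp add: algebra_simps)
    also have "... = (1-W^2)*(4*W^2-1)^2" unfolding mW by algebra
    finally show ?thesis by (simp add: eq_divide_eq mult.commute)
  qed
  have e2: "D = -3*(4*W^2-1)" unfolding D_def by simp
  have e3: "2*m - 1 = W*(4*W^2-3)" using mW by (simp add: algebra_simps power3_eq_cube power2_eq_square)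
  have "y*(1-y)*((96*W/D^3)/S + (2/D)/S^3 + 3*W/(4*S^5))
         + (1/2-2*y)*((2/D)/S + W/(2*S^3)) - 5/36*(W/S)
       = (1/S) * ((1-m)*m*(96*W/D^3) + (2*m-1)/D + W/9)"
    unfolding S3 S5 y using m Snz Dn by (simp add: field_simps) algebra
  also have "(1-m)*m*(96*W/D^3) + (2*m-1)/D + W/9 = 0"
    unfolding e1 e2 e3 using W4 by (simp add: field_simps) algebra
  finally show ?thesis unfolding D_def by simp
qed

lemma D_nz: assumes "w \<in> ball (1::complex) (1/10)" shows "3 - 12*w^2 \<noteq> 0"
proof
  assume "3 - 12*w^2 = 0"
  hence "(2*w - 1)*(2*w + 1) = 0" by (simp add: algebra_simps power2_eq_square)
  hence "2*w - 1 = 0 \<or> 2*w + 1 = 0" by simp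
  hence "w = 1/2 \<or> w = -1/2"
    by (metis add.commute add_eq_0_iff eq_iff_diff_eq_0 minus_divide_left nonzero_mult_div_cancel_left zero_neq_numeral)
  thus False
  proof
    assume h: "w = 1/2" have "dist 1 w = 1/2" unfolding h by (simp add: dist_norm)
    thus False using assms by simp
  next
    assume h: "w = -1/2" have "dist 1 w = 3/2" unfolding h by (simp add: dist_norm)
    thus False using assms by simp
  qed
qed

lemma not_nonpos_1m: assumes "norm (y::complex) < 1" shows "1 - y \<notin> \<real>\<^sub>\<le>\<^sub>0"
proof -
  have "Re y \<le> norm y" by (rule complex_Re_le_cmod)
  hence "Re (1 - y) > 0" using assms by simp
  thus ?thesis by (auto simp: complex_nonpos_Reals_iff)
qed

lemma fpsX_deriv_nth: "(fps_X * fps_deriv (F::complex fps)) $ n = of_nat n * F $ n"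
  by (cases n) (auto simp: algebra_simps)

lemma fpsX_deriv2_nth: "(fps_X * fps_deriv (fps_deriv (F::complex fps))) $ n = of_nat n * of_nat (n+1) * F $ (n+1)"
  by (cases n) (auto simp: algebra_simps)

lemma fpsXX_deriv2_nth: "(fps_X * (fps_X * fps_deriv (fps_deriv (F::complex fps)))) $ n = of_nat n * (of_nat n - 1) * F $ n"
  by (cases n) (auto simp: algebra_simps fpsX_deriv2_nth[simplified])

lemma gaussF_closed:
  obtains \<rho> w where "\<rho> > 0" "\<rho> \<le> 1/2" "w holomorphic_on ball 0 \<rho>" "w 0 = 1"
    "\<And>y. y \<in> ball 0 \<rho> \<Longrightarrow> 4*(w y)^3 - 3*w y = 1 - 2*y"
    "\<And>y. y \<in> ball 0 \<rho> \<Longrightarrow> w y \<in> ball 1 (1/10)"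
    "\<And>y. y \<in> ball 0 \<rho> \<Longrightarrow> (w has_field_derivative 2/(3 - 12*(w y)^2)) (at y)"
    "\<And>y. y \<in> ball 0 \<rho> \<Longrightarrow> gauss_F (1/6) (5/6) (1/2) y = w y / csqrt (1 - y)"
proof -
  obtain \<rho>0 :: real and w :: "complex \<Rightarrow> complex" where w: "\<rho>0 > 0" "w holomorphic_on ball 0 \<rho>0" "w 0 = 1"
    "\<And>y. y \<in> ball 0 \<rho>0 \<Longrightarrow> 4*(w y)^3 - 3*w y = 1 - 2*y"
    "\<And>y. y \<in> ball 0 \<rho>0 \<Longrightarrow> w y \<in> ball 1 (1/10)"
    "\<And>y. y \<in> ball 0 \<rho>0 \<Longrightarrow> (w has_field_derivative 2/(3 - 12*(w y)^2)) (at y)"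
    by (rule cubic_inverse) blast
  define \<rho>1 where "\<rho>1 = min \<rho>0 (1/2)"
  define B where "B = ball (0::complex) \<rho>1"
  have \<rho>1: "\<rho>1 > 0" "\<rho>1 \<le> \<rho>0" "\<rho>1 \<le> 1/2" using w(1) unfolding \<rho>1_def by auto
  have B0: "y \<in> ball 0 \<rho>0" if "y \<in> B" for y using that \<rho>1 unfolding B_def by auto
  have Bn: "norm y < 1" if "y \<in> B" for y using that \<rho>1 unfolding B_def by auto
  have oB: "open B" unfolding B_def by simp
  define s where "s = (\<lambda>y::complex. csqrt (1 - y))"
  define D where "D = (\<lambda>y. 3 - 12*(w y)^2)"
  define G where "G = (\<lambda>y. w y / s y)"
  define G1 where "G1 = (\<lambda>y. (2 / D y) / s y + w y / (2 * s y ^ 3))"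
  define G2 where "G2 = (\<lambda>y. (96 * w y / D y ^ 3) / s y + (2 / D y) / s y ^ 3 + 3 * w y / (4 * s y ^ 5))"
  have snp: "1 - y \<notin> \<real>\<^sub>\<le>\<^sub>0" if "y \<in> B" for y using not_nonpos_1m Bn that by blast
  have snz: "s y \<noteq> 0" if "y \<in> B" for y using snp[OF that] unfolding s_def by auto
  have s2: "s y ^ 2 = 1 - y" for y unfolding s_def by simp
  have Dnz: "D y \<noteq> 0" if "y \<in> B" for y using D_nz w(5) B0 that unfolding D_def by blast
  have dw: "(w has_field_derivative 2 / D y) (at y)" if "y \<in> B" for y
    using w(6) B0 that unfolding D_def by blast
  have ds: "(s has_field_derivative -1 / (2 * s y)) (at y)" if "y \<in> B" for y
  proof -
    have "((\<lambda>y. csqrt (1 - y)) has_field_derivative (-1) / (2 * csqrt (1 - y))) (at y)"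
      by (rule derivative_eq_intros refl snp[OF that])+ simp
    thus ?thesis unfolding s_def .
  qed
  have dD: "(D has_field_derivative -24 * w y * (2 / D y)) (at y)" if "y \<in> B" for y
    unfolding D_def
    by (rule derivative_eq_intros refl dw[unfolded D_def, OF that])+ (simp add: algebra_simps)
  have dG: "(G has_field_derivative G1 y) (at y)" if "y \<in> B" for y
  proof -
    have "(G has_field_derivative ((2 / D y) * s y - w y * (-1 / (2 * s y))) / (s y)^2) (at y)"
      unfolding G_def by (rule derivative_eq_intros dw[OF that] ds[OF that] refl snz[OF that])+
        (simp add: power2_eq_square)
    also have "((2 / D y) * s y - w y * (-1 / (2 * s y))) / (s y)^2 = G1 y"
      unfolding G1_def using snz[OF that] Dnz[OF that]
      by (simp add: field_simps power2_eq_square power3_eq_cube)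
    finally show ?thesis .
  qed
  have dG1: "(G1 has_field_derivative G2 y) (at y)" if "y \<in> B" for y
  proof -
    define E where "E = ((- (2 * (-24 * w y * (2 / D y)))/ (D y)^2) * s y - (2 / D y) * (-1 / (2 * s y))) / (s y)^2
        + ((2 / D y) * (2 * s y ^ 3) - w y * (2 * (of_nat 3 * s y ^ 2 * (-1 / (2 * s y))))) / (2 * s y ^ 3)^2"
    have "(G1 has_field_derivative E) (at y)"
      unfolding G1_def E_def
      by (rule derivative_eq_intros dw[OF that] ds[OF that] dD[OF that] refl snz[OF that] Dnz[OF that])+
        (auto simp: power2_eq_square snz[OF that] Dnz[OF that])
    moreover have "E = G2 y"
      unfolding G2_def E_def using snz[OF that] Dnz[OF that]
      by (simp add: field_simps power2_eq_square power3_eq_cube eval_nat_numeral)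
    ultimately show ?thesis by simp
  qed
  have ode: "y*(1-y)*G2 y + (1/2-2*y)*G1 y - 5/36*G y = 0" if "y \<in> B" for y
    using ode_alg[OF s2 snz[OF that] Dnz[OF that, unfolded D_def] w(4)[OF B0[OF that]]]
    unfolding G_def G1_def G2_def D_def by simp
  have holG: "G holomorphic_on B"
    using dG oB by (auto simp: holomorphic_on_open)
  have B00: "(0::complex) \<in> B" unfolding B_def using \<rho>1 by simp
  have an0: "G analytic_on {0}" using holG oB B00 analytic_at by blast
  define Gh where "Gh = fps_expansion G 0"
  have hG: "G has_fps_expansion Gh" using analytic_at_imp_has_fps_expansion_0[OF an0] Gh_def by simp
  have d1: "deriv G y = G1 y" if "y \<in> B" for y using DERIV_imp_deriv[OF dG[OF that]] .
  have d2: "deriv (deriv G) y = G2 y" if "y \<in> B" for y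
  proof -
    have "eventually (\<lambda>x. x \<in> B) (nhds y)" using eventually_nhds_in_open[OF oB that] .
    hence "eventually (\<lambda>x. deriv G x = G1 x) (nhds y)" by (rule eventually_mono) (use d1 in auto)
    hence "deriv (deriv G) y = deriv G1 y" by (rule deriv_cong_ev) simp
    also have "... = G2 y" using DERIV_imp_deriv[OF dG1[OF that]] .
    finally show ?thesis .
  qed
  define \<Psi> where "\<Psi> = (\<lambda>y. y*(1-y)*deriv (deriv G) y + (1/2 - 2*y)*deriv G y - 5/36*G y)"
  define \<Psi>h where "\<Psi>h = fps_X*(1-fps_X)*fps_deriv(fps_deriv Gh) + (fps_const (1/2) - fps_const 2*fps_X)*fps_deriv Gh - fps_const (5/36)*Gh"
  have h\<Psi>: "\<Psi> has_fps_expansion \<Psi>h" unfolding \<Psi>_def \<Psi>h_def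
    by (intro has_fps_expansion_diff has_fps_expansion_add has_fps_expansion_mult has_fps_expansion_deriv
        has_fps_expansion_fps_X has_fps_expansion_1 has_fps_expansion_const hG has_fps_expansion_cmult_left)
  have \<Psi>0: "eventually (\<lambda>y. \<Psi> y = 0) (nhds 0)"
  proof -
    have "eventually (\<lambda>x. x \<in> B) (nhds 0)" using eventually_nhds_in_open[OF oB B00] .
    thus ?thesis by (rule eventually_mono) (use ode d1 d2 in \<open>auto simp: \<Psi>_def\<close>)
  qed
  have "(\<lambda>_. 0) has_fps_expansion \<Psi>h" using h\<Psi> has_fps_expansion_cong[OF \<Psi>0 refl] by simp
  have \<Psi>h0: "\<Psi>h = 0"
  proof (rule fps_ext)
    fix n
    have "\<Psi>h $ n = (deriv ^^ n) (\<lambda>_. 0) 0 / fact n"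
      by (rule fps_nth_fps_expansion) fact
    also have "... = (0::complex fps) $ n"
      by (rule fps_nth_fps_expansion[symmetric]) simp
    finally show "\<Psi>h $ n = 0 $ n" .
  qed
  have rec: "of_nat (n+1) * (of_nat n + 1/2) * Gh$(n+1) = (of_nat n + 1/6)*(of_nat n + 5/6) * Gh$n" for n
  proof -
    have "\<Psi>h = fps_X * fps_deriv (fps_deriv Gh) - fps_X * (fps_X * fps_deriv (fps_deriv Gh))
       + fps_const (1/2) * fps_deriv Gh - fps_const 2 * (fps_X * fps_deriv Gh) - fps_const (5/36) * Gh"
      unfolding \<Psi>h_def by (simp add: algebra_simps)
    hence "\<Psi>h $ n = of_nat n * of_nat (n+1) * Gh $ (n+1) - of_nat n * (of_nat n - 1) * Gh $ n
       + 1/2 * (of_nat (n+1) * Gh $ (n+1)) - 2 * (of_nat n * Gh $ n) - 5/36 * Gh $ n"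
      by (simp only: fps_sub_nth fps_add_nth fps_mult_left_const_nth fpsX_deriv_nth fpsX_deriv2_nth
           fpsXX_deriv2_nth fps_deriv_nth) (simp only: mult.assoc)
    hence "0 = of_nat n * of_nat (n+1) * Gh $ (n+1) - of_nat n * (of_nat n - 1) * Gh $ n
       + 1/2 * (of_nat (n+1) * Gh $ (n+1)) - 2 * (of_nat n * Gh $ n) - 5/36 * Gh $ n"
      using \<Psi>h0 by simp
    thus ?thesis by (simp add: field_simps)
  qed
  have a0: "Gh $ 0 = 1"
  proof -
    have "Gh $ 0 = (deriv ^^ 0) G 0 / fact 0" by (rule fps_nth_fps_expansion[OF hG])
    thus ?thesis using w(3) by (simp add: G_def s_def)
  qed
  have pnz: "pochhammer (1/2::complex) n \<noteq> 0" for n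
  proof
    assume "pochhammer (1/2::complex) n = 0"
    then obtain k where "(1/2::complex) = - of_nat k" unfolding pochhammer_eq_0_iff by blast
    hence "Re (1/2::complex) = Re (- of_nat k)" by (rule arg_cong)
    thus False by simp
  qed
  have coef: "Gh $ n = pochhammer (1/6) n * pochhammer (5/6) n / (pochhammer (1/2) n * fact n)" for n
  proof (induction n)
    case 0 thus ?case using a0 by simp
  next
    case (Suc n)
    have nz: "of_nat (n+1) * (of_nat n + 1/2) \<noteq> (0::complex)"
    proof -
      have "(of_nat n + 1/2::complex) \<noteq> 0"
      proof
        assume "(of_nat n + 1/2::complex) = 0"
        hence "Re (of_nat n + 1/2::complex) = 0" by simp
        thus False by simp
      qed
      moreover have "(of_nat (n+1)::complex) \<noteq> 0" by (metis add_is_0 of_nat_eq_0_iff one_neq_zero)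
      ultimately show ?thesis by (simp only: mult_eq_0_iff) blast
    qed
    have "Gh $ Suc n = (of_nat n + 1/6)*(of_nat n + 5/6) * Gh$n / (of_nat (n+1) * (of_nat n + 1/2))"
    proof -
      have "Gh $ Suc n * (of_nat (n+1) * (of_nat n + 1/2)) = (of_nat n + 1/6)*(of_nat n + 5/6) * Gh$n"
        using rec[of n] by (metis Suc_eq_plus1 mult.commute)
      thus ?thesis using nonzero_eq_divide_eq[OF nz] by blast
    qed
    also have "... = pochhammer (1/6) (Suc n) * pochhammer (5/6) (Suc n) / (pochhammer (1/2) (Suc n) * fact (Suc n))"
      unfolding Suc.IH pochhammer_Suc fact_Suc using pnz[of n] nz
      by (simp add: field_simps)
    finally show ?case .
  qed
  have gF: "gauss_F (1/6) (5/6) (1/2) y = eval_fps Gh y" for y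
    unfolding gauss_F_def eval_fps_def coef by simp
  from hG have "eventually (\<lambda>y. eval_fps Gh y = G y) (nhds 0)" unfolding has_fps_expansion_def by blast
  then obtain \<rho>2 where \<rho>2: "\<rho>2 > 0" "\<And>y. dist y 0 < \<rho>2 \<Longrightarrow> eval_fps Gh y = G y"
    unfolding eventually_nhds_metric by blast
  show ?thesis
  proof (rule that[of "min \<rho>1 \<rho>2" w])
    have sub: "ball 0 (min \<rho>1 \<rho>2) \<subseteq> ball 0 \<rho>0" using \<rho>1 by auto
    show "w holomorphic_on ball 0 (min \<rho>1 \<rho>2)" using w(2) sub holomorphic_on_subset by blast
    fix y :: complex assume y: "y \<in> ball 0 (min \<rho>1 \<rho>2)"
    hence yB: "y \<in> B" unfolding B_def by simp
    show "4*(w y)^3 - 3*w y = 1 - 2*y" using w(4) y sub by blast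
    show "w y \<in> ball 1 (1/10)" using w(5) y sub by blast
    show "(w has_field_derivative 2/(3 - 12*(w y)^2)) (at y)" using w(6) y sub by blast
    have "dist y 0 < \<rho>2" using y by (simp add: dist_commute)
    thus "gauss_F (1/6) (5/6) (1/2) y = w y / csqrt (1 - y)"
      using gF \<rho>2(2) unfolding G_def s_def by simp
  qed (use \<rho>1 \<rho>2 w(3) in auto)
qed

lemma per_int:
  fixes f :: "complex \<Rightarrow> 'b"
  assumes "\<forall>z. f (z + \<omega>) = f z"
  shows "f (z + of_int m * \<omega>) = f z"
proof -
  have nat: "f (z + of_nat n * \<omega>) = f z" for n z
  proof (induction n)
    case (Suc n)
    have "f (z + of_nat (Suc n) * \<omega>) = f ((z + of_nat n * \<omega>) + \<omega>)" by (simp add: algebra_simps)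
    also have "... = f (z + of_nat n * \<omega>)" using assms by blast
    finally show ?case using Suc by simp
  qed simp
  show ?thesis
  proof (cases m rule: int_cases)
    case (nonneg n) thus ?thesis using nat by simp
  next
    case (neg n)
    have m: "(of_int m :: complex) = - of_nat (Suc n)" using neg by simp
    have e: "(z + of_int m * \<omega>) + of_nat (Suc n) * \<omega> = z" unfolding m by (simp add: algebra_simps)
    have "f (z + of_int m * \<omega>) = f ((z + of_int m * \<omega>) + of_nat (Suc n) * \<omega>)" by (rule nat[symmetric])
    also have "... = f z" by (simp only: e)
    finally show ?thesis .
  qed
qed

lemma periodic_bounded:
  fixes f :: "complex \<Rightarrow> complex"
  assumes cont: "continuous_on UNIV f" and w1: "\<omega>1 \<noteq> 0" and im: "Im (\<omega>2/\<omega>1) \<noteq> 0"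
    and p1: "\<forall>z. f (z+\<omega>1) = f z" and p2: "\<forall>z. f (z+\<omega>2) = f z"
  shows "bounded (range f)"
proof -
  define K where "K = cball (0::complex) (norm \<omega>1 + norm \<omega>2)"
  have "compact (f ` K)" unfolding K_def
    by (rule compact_continuous_image) (use cont continuous_on_subset in auto)
  hence bK: "bounded (f ` K)" by (rule compact_imp_bounded)
  have "f z \<in> f ` K" for z
  proof -
    define \<tau> where "\<tau> = \<omega>2/\<omega>1"
    define \<zeta> where "\<zeta> = z/\<omega>1"
    define b where "b = Im \<zeta> / Im \<tau>"
    define a where "a = Re \<zeta> - b * Re \<tau>"
    have imt: "Im \<tau> \<noteq> 0" using im unfolding \<tau>_def .
    have "\<zeta> = of_real a + of_real b * \<tau>"
    proof (rule complex_eqI)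
      show "Re \<zeta> = Re (of_real a + of_real b * \<tau>)" unfolding a_def by simp
      show "Im \<zeta> = Im (of_real a + of_real b * \<tau>)" unfolding b_def using imt by simp
    qed
    hence z: "z = of_real a * \<omega>1 + of_real b * \<omega>2"
      using w1 unfolding \<zeta>_def \<tau>_def by (simp add: field_simps)
    define m where "m = floor a"
    define n where "n = floor b"
    define z' where "z' = of_real (a - m) * \<omega>1 + of_real (b - n) * \<omega>2"
    have am: "0 \<le> a - m" "a - m \<le> 1" unfolding m_def by linarith+
    have bn: "0 \<le> b - n" "b - n \<le> 1" unfolding n_def by linarith+
    have "norm z' \<le> norm (of_real (a - m) * \<omega>1) + norm (of_real (b - n) * \<omega>2)"
      unfolding z'_def by (rule norm_triangle_ineq)
    also have "... = \<bar>a - m\<bar> * norm \<omega>1 + \<bar>b - n\<bar> * norm \<omega>2" by (simp only: norm_mult norm_of_real)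
    also have "... \<le> 1 * norm \<omega>1 + 1 * norm \<omega>2"
      using am bn by (intro add_mono mult_right_mono) auto
    finally have "z' \<in> K" unfolding K_def by simp
    moreover have "z = (z' + of_int m * \<omega>1) + of_int n * \<omega>2"
      unfolding z z'_def by (simp add: algebra_simps)
    hence "f z = f z'" using per_int[OF p1] per_int[OF p2] by metis
    ultimately show ?thesis by blast
  qed
  hence "range f \<subseteq> f ` K" by blast
  thus ?thesis using bK bounded_subset by blast
qed

lemma remove_sings_periodic:
  assumes p: "\<forall>z. f (z + \<omega>) = f z"
  shows "remove_sings f (z + \<omega>) = remove_sings f z"
proof -
  have fw: "f (x - \<omega>) = f x" for x using p[rule_format, of "x - \<omega>"] by simp
  have A: "f \<midarrow>(z+\<omega>)\<rightarrow> c" if "f \<midarrow>z\<rightarrow> c" for c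
  proof -
    have "(\<lambda>x. f (x + (-\<omega>))) \<midarrow>(z - (-\<omega>))\<rightarrow> c" by (rule LIM_offset[OF that])
    thus ?thesis using fw by simp
  qed
  have B: "f \<midarrow>z\<rightarrow> c" if "f \<midarrow>(z+\<omega>)\<rightarrow> c" for c
  proof -
    have "(\<lambda>x. f (x + \<omega>)) \<midarrow>(z + \<omega> - \<omega>)\<rightarrow> c" by (rule LIM_offset[OF that])
    thus ?thesis using p by simp
  qed
  show ?thesis
  proof (cases "\<exists>c. f \<midarrow>z\<rightarrow> c")
    case True
    then obtain c where c: "f \<midarrow>z\<rightarrow> c" by blast
    have "remove_sings f (z + \<omega>) = c" using A[OF c] by (rule remove_sings_eqI)
    moreover have "remove_sings f z = c" using c by (rule remove_sings_eqI)
    ultimately show ?thesis by simp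
  next
    case False
    hence "\<not> (\<exists>c. f \<midarrow>(z+\<omega>)\<rightarrow> c)" using B by blast
    thus ?thesis using False unfolding remove_sings_def by simp
  qed
qed

lemma deriv_periodic:
  fixes f :: "complex \<Rightarrow> complex"
  assumes p: "\<forall>z. f (z + \<omega>) = f z"
  shows "deriv f (z + \<omega>) = deriv f z"
proof -
  have e: "(\<lambda>x. f (x + \<omega>)) = f" using p by auto
  have "(f has_field_derivative D) (at (z + \<omega>)) \<longleftrightarrow> (f has_field_derivative D) (at z)" for D
    using DERIV_shift[of f D z \<omega>] unfolding e .
  thus ?thesis unfolding deriv_def by simp
qed

lemma elliptic_zero_or_const:
  fixes Q :: "complex \<Rightarrow> complex"
  assumes nm: "Q nicely_meromorphic_on UNIV" and w1: "\<omega>1 \<noteq> 0" and im: "Im (\<omega>2/\<omega>1) \<noteq> 0"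
    and p1: "\<forall>z. Q (z+\<omega>1) = Q z" and p2: "\<forall>z. Q (z+\<omega>2) = Q z"
  shows "(\<exists>z. Q analytic_on {z} \<and> Q z = 0) \<or> (\<exists>c. \<forall>z. Q analytic_on {z} \<longrightarrow> Q z = c)"
proof (cases "\<exists>z. Q analytic_on {z} \<and> Q z = 0")
  case True thus ?thesis by blast
next
  case False
  hence nz: "\<not> (\<exists>z. Q analytic_on {z} \<and> Q z = 0)" by blast
  have mero: "Q meromorphic_on UNIV" using nm unfolding nicely_meromorphic_on_def by blast
  define I where "I = (\<lambda>w. inverse (Q w))"
  define P where "P = remove_sings I"
  have meroI: "I meromorphic_on UNIV" unfolding I_def by (intro meromorphic_intros mero)
  have anP: "P analytic_on {z}" for z
  proof -
    have iso: "isolated_singularity_at I z"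
      using meroI meromorphic_on_isolated_singularity meromorphic_on_subset by blast
    have "\<exists>c. I \<midarrow>z\<rightarrow> c"
    proof (cases "is_pole Q z")
      case True
      hence "filterlim Q at_infinity (at z)" unfolding is_pole_def .
      hence "I \<midarrow>z\<rightarrow> 0" unfolding I_def using filterlim_compose[OF tendsto_inverse_0] by blast
      thus ?thesis by blast
    next
      case False
      hence an: "Q analytic_on {z}" using nicely_meromorphic_on_imp_analytic_at[OF nm] by blast
      hence "Q z \<noteq> 0" using nz by blast
      moreover have "Q \<midarrow>z\<rightarrow> Q z" using an analytic_at_imp_isCont isContD by blast
      ultimately have "I \<midarrow>z\<rightarrow> inverse (Q z)" unfolding I_def by (intro tendsto_intros)
      thus ?thesis by blast
    qed
    then obtain c where "I \<midarrow>z\<rightarrow> c" by blast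
    thus ?thesis unfolding P_def by (rule remove_sings_analytic_at[OF iso])
  qed
  hence "P analytic_on UNIV" using analytic_on_analytic_at by blast
  hence holP: "P holomorphic_on UNIV" by (rule analytic_imp_holomorphic)
  have pI1: "\<forall>z. I (z+\<omega>1) = I z" and pI2: "\<forall>z. I (z+\<omega>2) = I z" unfolding I_def using p1 p2 by auto
  have "bounded (range P)"
  proof (rule periodic_bounded[OF _ w1 im])
    show "continuous_on UNIV P" using holP holomorphic_on_imp_continuous_on by blast
    show "\<forall>z. P (z + \<omega>1) = P z" unfolding P_def using remove_sings_periodic[OF pI1] by blast
    show "\<forall>z. P (z + \<omega>2) = P z" unfolding P_def using remove_sings_periodic[OF pI2] by blast
  qed
  hence "P constant_on UNIV" using Liouville_theorem holP by blast
  then obtain c where c: "\<And>z. P z = c" unfolding constant_on_def by blast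
  have "\<exists>c. \<forall>z. Q analytic_on {z} \<longrightarrow> Q z = c"
  proof (intro exI allI impI)
    fix z assume an: "Q analytic_on {z}"
    hence "Q z \<noteq> 0" using nz by blast
    moreover have "I analytic_on {z}" unfolding I_def using an \<open>Q z \<noteq> 0\<close>
      by (intro analytic_intros) auto
    hence "P z = I z" unfolding P_def by (rule remove_sings_at_analytic)
    ultimately show "Q z = inverse c" using c[of z] unfolding I_def by (simp add: inverse_eq_iff_eq)
  qed
  thus ?thesis by blast
qed

lemma alg_ode:
  fixes q dq dS S K :: complex
  assumes c: "4*q^3 - 3*q = 1 - 2*K*S" and d: "(3 - 12*q^2)*dq = 2*K*dS"
    and a: "q^2*dS^2 = 4*S*(1-S)*(1-K*S)" and nz: "4*q^2 - 1 \<noteq> 0"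
  shows "9*q^2*dq^2 = 2*(1-q^2)*(4*q^3 - 3*q + 2*K - 1)"
proof -
  have "(4*q^2 - 1)^2 * (9*q^2*dq^2) = q^2 * ((3 - 12*q^2)*dq)^2"
    by (simp add: algebra_simps power2_eq_square)
  also have "... = 4*K^2 * (q^2*dS^2)" unfolding d by (simp add: algebra_simps power2_eq_square)
  also have "... = 16*K^2*S*(1-S)*(1-K*S)" unfolding a by (simp add: algebra_simps)
  also have "... = (4*q^2 - 1)^2 * (2*(1-q^2)*(4*q^3 - 3*q + 2*K - 1))"
  proof -
    have h: "4*q^3 - 3*q = 1 - 2*K*S" by (rule c)
    have "(4*q^2 - 1)^2 * (1 - q^2) = (1 - (4*q^3 - 3*q)) * (1 + (4*q^3 - 3*q))"
      by (simp add: algebra_simps power2_eq_square power3_eq_cube)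
    moreover have "(4*q^2 - 1)^2 * (2*(1-q^2)*X) = 2 * ((4*q^2 - 1)^2 * (1 - q^2)) * X" for X
      by (simp add: ac_simps)
    ultimately have "(4*q^2 - 1)^2 * (2*(1-q^2)*(4*q^3 - 3*q + 2*K - 1))
        = 2 * ((1 - (4*q^3 - 3*q)) * (1 + (4*q^3 - 3*q))) * ((4*q^3 - 3*q) + 2*K - 1)"
      by (metis add_diff_eq)
    also have "... = 2 * ((2*K*S) * (2 - 2*K*S)) * (2*K - 2*K*S)" unfolding h by (simp add: algebra_simps)
    also have "... = 16*K^2*S*(1-S)*(1-K*S)" by (simp add: algebra_simps power2_eq_square)
    finally show ?thesis by simp
  qed
  finally show ?thesis using nz by simp
qed

lemma alg_Q:
  fixes q dS S K :: complex
  assumes c: "4*q^3 - 3*q = 1 - 2*K*S"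
    and a: "q^2*dS^2 = 4*S*(1-S)*(1-K*S)" and nz: "4*q^2 - 3 \<noteq> 0" and dS: "dS \<noteq> 0"
  shows "q = (1 - 2*K*S) * dS^2 / (4*(4*S*(1-S)*(1-K*S)) - 3*dS^2)"
proof -
  have "4*(4*S*(1-S)*(1-K*S)) - 3*dS^2 = dS^2 * (4*q^2 - 3)" unfolding a[symmetric]
    by (simp add: algebra_simps)
  moreover have "(1 - 2*K*S) * dS^2 = q * (dS^2 * (4*q^2 - 3))" unfolding c[symmetric]
    by (simp add: algebra_simps power2_eq_square power3_eq_cube)
  ultimately show ?thesis using nz dS by simp
qed

lemma q_nz:
  assumes "q \<in> ball (1::complex) (1/10)"
  shows "4*q^2 - 1 \<noteq> 0" "4*q^2 - 3 \<noteq> 0" "3 - 12*q^2 \<noteq> 0" "q \<noteq> 0"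
proof -
  show "3 - 12*q^2 \<noteq> 0" using D_nz[OF assms] .
  thus "4*q^2 - 1 \<noteq> 0" by (auto simp: algebra_simps)
  have "norm (1 - q) < 1/10" using assms by (simp add: dist_norm)
  moreover have "1 - norm (1 - q) \<le> norm q" using norm_triangle_ineq2[of 1 "1 - q"] by simp
  ultimately have nq: "norm q > 9/10" by simp
  thus "q \<noteq> 0" by auto
  have "(9/10::real)^2 < (norm q)^2" by (rule power_strict_mono) (use nq in auto)
  hence "norm (q^2) > 81/100" by (simp add: norm_power power_divide)
  show "4*q^2 - 3 \<noteq> 0"
  proof
    assume "4*q^2 - 3 = 0"
    hence h: "q^2 = 3/4" by (simp add: field_simps)
    have "norm (q^2) = 3/4" unfolding h by simp
    thus False using \<open>norm (q^2) > 81/100\<close> by simp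
  qed
qed

lemma local_structure:
  fixes \<kappa> r :: real and \<phi> :: "complex \<Rightarrow> complex"
  assumes \<kappa>: "0 < \<kappa>" "\<kappa> < 1" and r: "0 < r" and hol\<phi>: "\<phi> holomorphic_on ball 0 r" and \<phi>0: "\<phi> 0 = 0"
    and inv: "\<And>u. u \<in> ball 0 r \<Longrightarrow> u_of_phi \<kappa> (\<phi> u) = u"
  obtains \<delta> q where "0 < \<delta>" "\<delta> \<le> r" "q holomorphic_on ball 0 \<delta>" "q 0 = 1"
    "\<And>u. u \<in> ball 0 \<delta> \<Longrightarrow> u \<noteq> 0 \<Longrightarrow> q u = (1 - 2*(complex_of_real \<kappa>)^2*(sin (\<phi> u))^2)
        * (deriv (\<lambda>u. (sin (\<phi> u))^2) u)^2 / (4*(4*(sin (\<phi> u))^2*(1 - (sin (\<phi> u))^2)*(1 - (complex_of_real \<kappa>)^2*(sin (\<phi> u))^2))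
          - 3*(deriv (\<lambda>u. (sin (\<phi> u))^2) u)^2)"
    "\<And>u. u \<in> ball 0 \<delta> \<Longrightarrow> 9*(q u)^2*(deriv q u)^2 = 2*(1 - (q u)^2)*(4*(q u)^3 - 3*q u + 2*(complex_of_real \<kappa>)^2 - 1)"
    "\<And>u. u \<in> ball 0 \<delta> \<Longrightarrow> q u = 1 \<Longrightarrow> u = 0"
proof -
  define K where "K = (complex_of_real \<kappa>)^2"
  define S where "S = (\<lambda>u. (sin (\<phi> u))^2)"
  have nK: "norm K = \<kappa>^2" unfolding K_def by (simp add: norm_power)
  have K1: "norm K < 1" using \<kappa> nK by (simp add: power_less_one_iff)
  have Knz: "K \<noteq> 0" unfolding K_def using \<kappa> by simp
  obtain \<rho> w where w: "\<rho> > 0" "\<rho> \<le> 1/2" "w holomorphic_on ball 0 \<rho>" "w 0 = 1"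
    "\<And>y. y \<in> ball 0 \<rho> \<Longrightarrow> 4*(w y)^3 - 3*w y = 1 - 2*y"
    "\<And>y. y \<in> ball 0 \<rho> \<Longrightarrow> w y \<in> ball 1 (1/10)"
    "\<And>y. y \<in> ball 0 \<rho> \<Longrightarrow> (w has_field_derivative 2/(3 - 12*(w y)^2)) (at y)"
    "\<And>y. y \<in> ball 0 \<rho> \<Longrightarrow> gauss_F (1/6) (5/6) (1/2) y = w y / csqrt (1 - y)"
    by (rule gaussF_closed) blast
  define \<rho>t where "\<rho>t = min (1/2) (sqrt \<rho>)"
  define T where "T = ball (0::complex) \<rho>t"
  have \<rho>t12: "\<rho>t > 0" "\<rho>t \<le> 1/2" "\<rho>t \<le> sqrt \<rho>" unfolding \<rho>t_def using w(1) by auto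
  have "\<rho>t^2 \<le> (sqrt \<rho>)^2" by (rule power_mono) (use \<rho>t12 in auto)
  hence \<rho>t: "\<rho>t > 0" "\<rho>t \<le> 1/2" "\<rho>t^2 \<le> \<rho>" using \<rho>t12 w(1) by auto
  have oT: "open T" and cT: "convex T" unfolding T_def by auto
  have T0: "0 \<in> T" unfolding T_def using \<rho>t by simp
  have Tn: "norm t < 1/2" if "t \<in> T" for t using that \<rho>t unfolding T_def by auto
  have Tsq: "K * t^2 \<in> ball 0 \<rho>" if "t \<in> T" for t
  proof -
    have "norm (K * t^2) = norm K * norm t ^ 2" by (simp add: norm_mult norm_power)
    also have "... \<le> norm t ^ 2" using K1 by (simp add: mult_left_le_one_le)
    also have "... < \<rho>t^2" using that \<rho>t unfolding T_def by (simp add: power_strict_mono)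
    also have "... \<le> \<rho>" by (rule \<rho>t(3))
    finally show ?thesis by simp
  qed
  have nn1: "1 - t^2 \<notin> \<real>\<^sub>\<le>\<^sub>0" if "t \<in> T" for t
  proof -
    have "norm t ^ 2 < (1/2)^2" by (rule power_strict_mono) (use Tn[OF that] in auto)
    hence "norm (t^2) < 1" by (simp add: norm_power power_divide)
    thus ?thesis by (rule not_nonpos_1m)
  qed
  have nnK: "1 - K * t^2 \<notin> \<real>\<^sub>\<le>\<^sub>0" if "t \<in> T" for t
  proof -
    have "norm (K * t^2) < 1" using Tsq[OF that] w(2) by simp
    thus ?thesis by (rule not_nonpos_1m)
  qed
  define h where "h = (\<lambda>t. gauss_F (1/6) (5/6) (1/2) (K * t^2) / csqrt (1 - t^2))"
  have h_eq: "h t = w (K*t^2) / csqrt (1 - K*t^2) / csqrt (1 - t^2)" if "t \<in> T" for t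
    unfolding h_def using w(8)[OF Tsq[OF that]] by simp
  have holh: "h holomorphic_on T"
  proof -
    have "(\<lambda>t. w (K*t^2)) holomorphic_on T"
    proof -
      have "(w \<circ> (\<lambda>t. K*t^2)) holomorphic_on T"
        by (rule holomorphic_on_compose_gen[OF _ w(3)]) (use Tsq in \<open>auto intro!: holomorphic_intros\<close>)
      thus ?thesis by (simp add: o_def)
    qed
    moreover have "1 - t^2 \<noteq> 0" "1 - K*t^2 \<noteq> 0" if "t \<in> T" for t
      using nn1[OF that] nnK[OF that] by auto
    ultimately have "(\<lambda>t. w (K*t^2) / csqrt (1 - K*t^2) / csqrt (1 - t^2)) holomorphic_on T"
      using nn1 nnK by (intro holomorphic_intros) (auto simp: csqrt_eq_0)
    thus ?thesis by (rule holomorphic_transform) (use h_eq in auto)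
  qed
  obtain Pr where Pr0: "\<And>x. x \<in> T \<Longrightarrow> (Pr has_field_derivative h x) (at x within T)"
    using holomorphic_convex_primitive'[OF cT oT holh] by blast
  have Pr: "(Pr has_field_derivative h x) (at x)" if "x \<in> T" for x
    using Pr0[OF that] at_within_open[OF that oT] by simp
  have ci: "contour_integral (linepath 0 s) h = Pr s - Pr 0" if "s \<in> T" for s
  proof -
    have "closed_segment 0 s \<subseteq> T" using cT T0 that by (simp add: closed_segment_subset)
    hence "(h has_contour_integral (Pr (pathfinish (linepath 0 s)) - Pr (pathstart (linepath 0 s)))) (linepath 0 s)"
      by (intro contour_integral_primitive[OF Pr0]) auto
    thus ?thesis by (simp add: contour_integral_unique)
  qed
  have u_eq: "u_of_phi \<kappa> z = contour_integral (linepath 0 (sin z)) h" for z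
    unfolding u_of_phi_def h_def K_def ..
  have cont\<phi>: "isCont \<phi> 0"
  proof -
    have "continuous_on (ball 0 r) \<phi>" using hol\<phi> holomorphic_on_imp_continuous_on by blast
    thus ?thesis using continuous_on_eq_continuous_at[of "ball 0 r" \<phi>] r by simp
  qed
  have ev1: "eventually (\<lambda>u. norm (sin (\<phi> u)) < \<rho>t) (nhds 0)"
  proof -
    have "((\<lambda>u. sin (\<phi> u)) \<longlongrightarrow> sin (\<phi> 0)) (nhds 0)"
      using cont\<phi> by (intro tendsto_intros) (simp add: isCont_def tendsto_nhds_iff)
    hence "((\<lambda>u. norm (sin (\<phi> u))) \<longlongrightarrow> 0) (nhds 0)" using \<phi>0 tendsto_norm_zero by fastforce
    thus ?thesis using \<rho>t(1) by (rule order_tendstoD)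
  qed
  have ev2: "eventually (\<lambda>u. Re (cos (\<phi> u)) > 0) (nhds 0)"
  proof -
    have "((\<lambda>u. cos (\<phi> u)) \<longlongrightarrow> cos (\<phi> 0)) (nhds 0)"
      using cont\<phi> by (intro tendsto_intros) (simp add: isCont_def tendsto_nhds_iff)
    hence "((\<lambda>u. Re (cos (\<phi> u))) \<longlongrightarrow> 1) (nhds 0)" using \<phi>0 tendsto_Re by fastforce
    thus ?thesis by (rule order_tendstoD) simp
  qed
  obtain \<delta>0 where \<delta>0: "\<delta>0 > 0" "\<And>u. dist u 0 < \<delta>0 \<Longrightarrow> norm (sin (\<phi> u)) < \<rho>t \<and> Re (cos (\<phi> u)) > 0"
    using eventually_conj[OF ev1 ev2] unfolding eventually_nhds_metric by blast
  define \<delta> where "\<delta> = min \<delta>0 r"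
  define U where "U = ball (0::complex) \<delta>"
  have \<delta>: "\<delta> > 0" "\<delta> \<le> r" unfolding \<delta>_def using \<delta>0 r by auto
  have oU: "open U" unfolding U_def by simp
  have Ur: "u \<in> ball 0 r" if "u \<in> U" for u using that unfolding U_def \<delta>_def by auto
  have UT: "sin (\<phi> u) \<in> T" and Ucos: "Re (cos (\<phi> u)) > 0" if "u \<in> U" for u
    using \<delta>0(2)[of u] that unfolding U_def \<delta>_def T_def by (auto simp: dist_commute)
  have key: "Pr (sin (\<phi> u)) - Pr 0 = u" if "u \<in> U" for u
    using inv[OF Ur[OF that]] ci[OF UT[OF that]] u_eq by simp
  have sin0: "sin (\<phi> u) \<noteq> 0" if "u \<in> U" "u \<noteq> 0" for u
    using key[OF that(1)] that(2) by auto
  have cosnz: "cos (\<phi> u) \<noteq> 0" if "u \<in> U" for u using Ucos[OF that] by auto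
  have d\<phi>: "(\<phi> has_field_derivative deriv \<phi> u) (at u)" if "u \<in> U" for u
    using holomorphic_derivI[OF hol\<phi> _ Ur[OF that]] by simp
  have STsq: "K * S u \<in> ball 0 \<rho>" if "u \<in> U" for u unfolding S_def using Tsq[OF UT[OF that]] .
  define q where "q = (\<lambda>u. w (K * S u))"
  define \<sigma> where "\<sigma> = (\<lambda>u. csqrt (1 - K * S u))"
  have \<sigma>2: "(\<sigma> u)^2 = 1 - K * S u" for u unfolding \<sigma>_def by simp
  have \<sigma>nz: "\<sigma> u \<noteq> 0" if "u \<in> U" for u
    using nnK[OF UT[OF that]] unfolding \<sigma>_def S_def by (auto simp: csqrt_eq_0)
  have cs: "csqrt (1 - (sin (\<phi> u))^2) = cos (\<phi> u)" if "u \<in> U" for u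
  proof -
    have "1 - (sin (\<phi> u))^2 = (cos (\<phi> u))^2" using sin_cos_squared_add[of "\<phi> u"] by (simp add: algebra_simps)
    thus ?thesis using csqrt_square Ucos[OF that] by simp
  qed
  have qd\<phi>: "q u * deriv \<phi> u = \<sigma> u" if "u \<in> U" for u
  proof -
    have "((\<lambda>u. Pr (sin (\<phi> u))) has_field_derivative h (sin (\<phi> u)) * (cos (\<phi> u) * deriv \<phi> u)) (at u)"
      by (rule DERIV_chain2[where f=Pr and g="\<lambda>u. sin (\<phi> u)" and x=u, OF Pr[OF UT[OF that]]]) (rule derivative_eq_intros d\<phi>[OF that] refl)+
    hence "((\<lambda>u. u + Pr 0) has_field_derivative h (sin (\<phi> u)) * (cos (\<phi> u) * deriv \<phi> u)) (at u)"
      by (rule has_field_derivative_transform_within_open[OF _ oU that]) (use key in \<open>auto simp: algebra_simps\<close>)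
    moreover have "((\<lambda>u. u + Pr 0) has_field_derivative 1) (at u)" by (auto intro!: derivative_eq_intros)
    ultimately have e: "h (sin (\<phi> u)) * (cos (\<phi> u) * deriv \<phi> u) = 1" by (rule DERIV_unique)
    have "h (sin (\<phi> u)) = q u / \<sigma> u / cos (\<phi> u)"
      using h_eq[OF UT[OF that]] cs[OF that] unfolding q_def \<sigma>_def S_def by simp
    with e have "q u / \<sigma> u / cos (\<phi> u) * (cos (\<phi> u) * deriv \<phi> u) = 1" by simp
    thus ?thesis using cosnz[OF that] \<sigma>nz[OF that] by (simp add: field_simps)
  qed
  have dS: "(S has_field_derivative 2 * sin (\<phi> u) * cos (\<phi> u) * deriv \<phi> u) (at u)" if "u \<in> U" for u
    unfolding S_def by (rule derivative_eq_intros d\<phi>[OF that] refl)+ (simp add: algebra_simps)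
  have derS: "deriv S u = 2 * sin (\<phi> u) * cos (\<phi> u) * deriv \<phi> u" if "u \<in> U" for u
    using DERIV_imp_deriv[OF dS[OF that]] .
  have qA: "(q u)^2 * (deriv S u)^2 = 4 * S u * (1 - S u) * (1 - K * S u)" if "u \<in> U" for u
  proof -
    have "(q u)^2 * (deriv S u)^2 = 4 * (sin (\<phi> u))^2 * (cos (\<phi> u))^2 * (q u * deriv \<phi> u)^2"
      unfolding derS[OF that] by (simp add: algebra_simps power2_eq_square)
    also have "... = 4 * S u * (1 - S u) * (1 - K * S u)"
    proof -
      have c2: "(cos (\<phi> u))^2 = 1 - (sin (\<phi> u))^2" using sin_cos_squared_add[of "\<phi> u"] by (simp add: algebra_simps)
      show ?thesis unfolding qd\<phi>[OF that] \<sigma>2 S_def c2 by (simp add: algebra_simps)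
    qed
    finally show ?thesis .
  qed
  have qc: "4*(q u)^3 - 3*q u = 1 - 2*K*S u" if "u \<in> U" for u
    unfolding q_def using w(5)[OF STsq[OF that]] by simp
  have qball: "q u \<in> ball 1 (1/10)" if "u \<in> U" for u unfolding q_def using w(6)[OF STsq[OF that]] .
  have holS: "S holomorphic_on U"
    unfolding S_def using hol\<phi> Ur by (intro holomorphic_intros) (auto intro: holomorphic_on_subset)
  have holq: "q holomorphic_on U"
  proof -
    have "(w \<circ> (\<lambda>u. K * S u)) holomorphic_on U"
      by (rule holomorphic_on_compose_gen[OF _ w(3)]) (use STsq holS in \<open>auto intro!: holomorphic_intros\<close>)
    thus ?thesis unfolding q_def by (simp add: o_def)
  qed
  have dq: "(q has_field_derivative 2/(3 - 12*(q u)^2) * (K * deriv S u)) (at u)" if "u \<in> U" for u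
  proof -
    have "((\<lambda>u. K * S u) has_field_derivative K * deriv S u) (at u)"
      using dS[OF that] derS[OF that] by (auto intro!: derivative_eq_intros)
    from DERIV_chain2[where f=w and g="\<lambda>u. K * S u" and x=u, OF w(7)[OF STsq[OF that]] this] show ?thesis unfolding q_def by simp
  qed
  have ode: "9*(q u)^2*(deriv q u)^2 = 2*(1 - (q u)^2)*(4*(q u)^3 - 3*q u + 2*K - 1)" if "u \<in> U" for u
  proof (rule alg_ode[OF qc[OF that] _ qA[OF that] q_nz(1)[OF qball[OF that]]])
    show "(3 - 12*(q u)^2) * deriv q u = 2*K*deriv S u"
      using DERIV_imp_deriv[OF dq[OF that]] q_nz(3)[OF qball[OF that]] by simp
  qed
  have Qf: "q u = (1 - 2*K*S u) * (deriv S u)^2 / (4*(4*S u*(1 - S u)*(1 - K*S u)) - 3*(deriv S u)^2)"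
    if "u \<in> U" "u \<noteq> 0" for u
  proof (rule alg_Q[OF qc[OF that(1)] qA[OF that(1)] q_nz(2)[OF qball[OF that(1)]]])
    have "deriv \<phi> u \<noteq> 0" using qd\<phi>[OF that(1)] \<sigma>nz[OF that(1)] by auto
    thus "deriv S u \<noteq> 0" unfolding derS[OF that(1)] using sin0[OF that] cosnz[OF that(1)] by simp
  qed
  have q1: "u = 0" if "u \<in> U" "q u = 1" for u
  proof (rule ccontr)
    assume "u \<noteq> 0"
    have "1 = 1 - 2*K*S u" using qc[OF that(1)] that(2) by simp
    hence "S u = 0" using Knz by simp
    thus False using sin0[OF that(1) \<open>u \<noteq> 0\<close>] unfolding S_def by simp
  qed
  have q0: "q 0 = 1" unfolding q_def S_def using \<phi>0 w(4) by simp
  show ?thesis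
  proof (rule that[of \<delta> q])
    show "q holomorphic_on ball 0 \<delta>" using holq unfolding U_def .
  next
    fix u :: complex assume "u \<in> ball 0 \<delta>" "u \<noteq> 0"
    thus "q u = (1 - 2*(complex_of_real \<kappa>)^2*(sin (\<phi> u))^2)
        * (deriv (\<lambda>u. (sin (\<phi> u))^2) u)^2 / (4*(4*(sin (\<phi> u))^2*(1 - (sin (\<phi> u))^2)*(1 - (complex_of_real \<kappa>)^2*(sin (\<phi> u))^2))
          - 3*(deriv (\<lambda>u. (sin (\<phi> u))^2) u)^2)"
      using Qf unfolding U_def K_def S_def by blast
  next
    fix u :: complex assume "u \<in> ball 0 \<delta>"
    thus "9*(q u)^2*(deriv q u)^2 = 2*(1 - (q u)^2)*(4*(q u)^3 - 3*q u + 2*(complex_of_real \<kappa>)^2 - 1)"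
      using ode unfolding U_def K_def by blast
  next
    fix u :: complex assume "u \<in> ball 0 \<delta>" "q u = 1"
    thus "u = 0" using q1 unfolding U_def by blast
  qed (use \<delta> q0 in auto)
qed

lemma main_S:
  fixes \<kappa> r \<epsilon> :: real and \<phi> f :: "complex \<Rightarrow> complex"
  assumes \<kappa>: "0 < \<kappa>" "\<kappa> < 1" and r: "0 < r" and hol\<phi>: "\<phi> holomorphic_on ball 0 r" and \<phi>0: "\<phi> 0 = 0"
    and inv: "\<And>u. u \<in> ball 0 r \<Longrightarrow> u_of_phi \<kappa> (\<phi> u) = u"
    and ell: "elliptic f" and \<epsilon>: "0 < \<epsilon>" "\<epsilon> \<le> r" and feq: "\<forall>u\<in>ball 0 \<epsilon>. f u = (sin (\<phi> u))^2"
  shows False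
proof -
  define K where "K = (complex_of_real \<kappa>)^2"
  define S where "S = (\<lambda>u. (sin (\<phi> u))^2)"
  obtain \<delta> q where lq: "0 < \<delta>" "\<delta> \<le> r" "q holomorphic_on ball 0 \<delta>" "q 0 = 1"
    "\<And>u. u \<in> ball 0 \<delta> \<Longrightarrow> u \<noteq> 0 \<Longrightarrow> q u = (1 - 2*K*S u) * (deriv S u)^2
        / (4*(4*S u*(1 - S u)*(1 - K*S u)) - 3*(deriv S u)^2)"
    "\<And>u. u \<in> ball 0 \<delta> \<Longrightarrow> 9*(q u)^2*(deriv q u)^2 = 2*(1 - (q u)^2)*(4*(q u)^3 - 3*q u + 2*K - 1)"
    "\<And>u. u \<in> ball 0 \<delta> \<Longrightarrow> q u = 1 \<Longrightarrow> u = 0"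
    using local_structure[OF \<kappa> r hol\<phi> \<phi>0 inv] unfolding K_def S_def by blast
  define \<delta>' where "\<delta>' = min \<delta> \<epsilon>"
  define U where "U = ball (0::complex) \<delta>'"
  have \<delta>': "\<delta>' > 0" using lq(1) \<epsilon> unfolding \<delta>'_def by auto
  have oU: "open U" unfolding U_def by simp
  have U\<delta>: "u \<in> ball 0 \<delta>" if "u \<in> U" for u using that unfolding U_def \<delta>'_def by auto
  have U\<epsilon>: "u \<in> ball 0 \<epsilon>" if "u \<in> U" for u using that unfolding U_def \<delta>'_def by auto
  have U0: "0 \<in> U" unfolding U_def using \<delta>' by simp
  from ell obtain \<omega>1 \<omega>2 where mf: "f meromorphic_on UNIV" and w: "\<omega>1 \<noteq> 0" "Im (\<omega>2 / \<omega>1) \<noteq> 0"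
    and pf1: "\<forall>z. f (z + \<omega>1) = f z" and pf2: "\<forall>z. f (z + \<omega>2) = f z"
    unfolding elliptic_def by blast
  have holS: "S holomorphic_on ball 0 \<epsilon>"
    unfolding S_def using hol\<phi> \<epsilon> by (intro holomorphic_intros) (auto intro: holomorphic_on_subset)
  have holf: "f holomorphic_on ball 0 \<epsilon>"
    using holS by (rule holomorphic_transform) (use feq S_def in auto)
  define G where "G = remove_sings f"
  have GS: "G u = S u" if "u \<in> ball 0 \<epsilon>" for u
  proof -
    have "f analytic_on {u}" using holf that analytic_at open_ball by blast
    hence "G u = f u" unfolding G_def by (rule remove_sings_at_analytic)
    thus ?thesis using feq that S_def by simp
  qed
  have dGS: "deriv G u = deriv S u" if "u \<in> ball 0 \<epsilon>" for u
  proof -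
    have "eventually (\<lambda>z. z \<in> ball 0 \<epsilon>) (nhds u)" using eventually_nhds_in_open[OF _ that] by simp
    hence "eventually (\<lambda>z. G z = S z) (nhds u)" by (rule eventually_mono) (use GS in auto)
    thus ?thesis by (rule deriv_cong_ev) simp
  qed
  have meroG: "G meromorphic_on UNIV" unfolding G_def using mf by (rule remove_sings_meromorphic)
  have pG1: "\<forall>z. G (z + \<omega>1) = G z" unfolding G_def using remove_sings_periodic[OF pf1] by blast
  have pG2: "\<forall>z. G (z + \<omega>2) = G z" unfolding G_def using remove_sings_periodic[OF pf2] by blast
  have pdG1: "\<forall>z. deriv G (z + \<omega>1) = deriv G z" using deriv_periodic[OF pG1] by blast
  have pdG2: "\<forall>z. deriv G (z + \<omega>2) = deriv G z" using deriv_periodic[OF pG2] by blast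
  define Q0 where "Q0 = (\<lambda>z. (1 - 2*K*G z) * (deriv G z)^2 / (4*(4*G z*(1 - G z)*(1 - K*G z)) - 3*(deriv G z)^2))"
  have meroQ0: "Q0 meromorphic_on UNIV" unfolding Q0_def
    by (intro meromorphic_intros meroG meromorphic_on_deriv)
  have pQ01: "\<forall>z. Q0 (z + \<omega>1) = Q0 z" unfolding Q0_def using pG1 pdG1 by simp
  have pQ02: "\<forall>z. Q0 (z + \<omega>2) = Q0 z" unfolding Q0_def using pG2 pdG2 by simp
  define Q where "Q = remove_sings Q0"
  have nmQ: "Q nicely_meromorphic_on UNIV" unfolding Q_def using meroQ0 by (rule remove_sings_nicely_meromorphic)
  have meroQ: "Q meromorphic_on UNIV" using nmQ unfolding nicely_meromorphic_on_def by blast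
  have pQ1: "\<forall>z. Q (z + \<omega>1) = Q z" unfolding Q_def using remove_sings_periodic[OF pQ01] by blast
  have pQ2: "\<forall>z. Q (z + \<omega>2) = Q z" unfolding Q_def using remove_sings_periodic[OF pQ02] by blast
  have Q0q: "Q0 z = q z" if "z \<in> U" "z \<noteq> 0" for z
    unfolding Q0_def GS[OF U\<epsilon>[OF that(1)]] dGS[OF U\<epsilon>[OF that(1)]] using lq(5)[OF U\<delta>[OF that(1)] that(2)] by simp
  have Qq: "Q u = q u" if "u \<in> U" for u
  proof -
    have ev: "eventually (\<lambda>z. z \<in> U - {0}) (at u)"
    proof (cases "u = 0")
      case True thus ?thesis using eventually_at_in_open[OF oU that] by simp
    next
      case False
      have "open (U - {0})" using oU by auto
      thus ?thesis using eventually_at_in_open'[of "U - {0}" u] that False by simp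
    qed
    have "q holomorphic_on U" using lq(3) holomorphic_on_subset U\<delta> by blast
    hence "isCont q u" using oU that holomorphic_on_imp_continuous_on continuous_on_eq_continuous_at by blast
    hence "q \<midarrow>u\<rightarrow> q u" by (rule isContD)
    moreover have "eventually (\<lambda>z. q z = Q0 z) (at u)" by (rule eventually_mono[OF ev]) (use Q0q in auto)
    ultimately have "Q0 \<midarrow>u\<rightarrow> q u" using Lim_transform_eventually by blast
    thus ?thesis unfolding Q_def by (rule remove_sings_eqI)
  qed
  have holqU: "q holomorphic_on U" using lq(3) holomorphic_on_subset U\<delta> by blast
  have holQ: "Q holomorphic_on U" using holqU by (rule holomorphic_transform) (use Qq in auto)
  have dQ: "deriv Q u = deriv q u" if "u \<in> U" for u
    using complex_derivative_transform_within_open[OF holQ holqU oU that] Qq by blast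
  have Q0: "Q 0 = 1" using Qq[OF U0] lq(4) by simp
  have anQU: "Q analytic_on {u}" if "u \<in> U" for u using holQ oU that analytic_at by blast
  from elliptic_zero_or_const[OF nmQ w pQ1 pQ2]
  show False
  proof
    assume "\<exists>c. \<forall>z. Q analytic_on {z} \<longrightarrow> Q z = c"
    then obtain c where c: "\<And>z. Q analytic_on {z} \<Longrightarrow> Q z = c" by blast
    have "c = 1" using c[OF anQU[OF U0]] Q0 by simp
    define u0 where "u0 = complex_of_real (\<delta>'/2)"
    have u0U: "u0 \<in> U" unfolding U_def u0_def using \<delta>' by simp
    have "q u0 = 1" using c[OF anQU[OF u0U]] Qq[OF u0U] \<open>c = 1\<close> by simp
    hence "u0 = 0" using lq(7)[OF U\<delta>[OF u0U]] by simp
    thus False unfolding u0_def using \<delta>' by simp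
  next
    assume "\<exists>z. Q analytic_on {z} \<and> Q z = 0"
    then obtain z1 where z1: "Q analytic_on {z1}" "Q z1 = 0" by blast
    define E where "E = (\<lambda>z. 9*(Q z)^2*(deriv Q z)^2 - 2*(1 - (Q z)^2)*(4*(Q z)^3 - 3*Q z + 2*K - 1))"
    have meroE: "E meromorphic_on UNIV" unfolding E_def by (intro meromorphic_intros meroQ meromorphic_on_deriv)
    have holE: "E holomorphic_on A" if "Q holomorphic_on A" "open A" for A
    proof -
      have "deriv Q holomorphic_on A" using holomorphic_deriv that by blast
      thus ?thesis unfolding E_def using that by (intro holomorphic_intros)
    qed
    have EU: "E u = 0" if "u \<in> U" for u
      unfolding E_def Qq[OF that] dQ[OF that] using lq(6)[OF U\<delta>[OF that]] by simp
    define RE where "RE = remove_sings E"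
    have nmRE: "RE nicely_meromorphic_on UNIV" unfolding RE_def using meroE by (rule remove_sings_nicely_meromorphic)
    have RE_E: "RE z = E z" if "Q holomorphic_on A" "open A" "z \<in> A" for z A
    proof -
      have "E analytic_on {z}" using holE[OF that(1,2)] that(2,3) analytic_at by blast
      thus ?thesis unfolding RE_def by (rule remove_sings_at_analytic)
    qed
    have "eventually (\<lambda>z. RE z = 0) (at 0)"
      by (rule eventually_mono[OF eventually_at_in_open'[OF oU U0]]) (use RE_E[OF holQ oU] EU in auto)
    hence "frequently (\<lambda>z. RE z = 0) (at 0)" by (rule eventually_frequently[rotated]) simp
    hence RE0: "RE w = 0" for w
      using frequently_eq_meromorphic_imp_constant[OF _ nmRE] by blast
    from z1(1) obtain N where N: "open N" "z1 \<in> N" "Q holomorphic_on N" using analytic_at by blast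
    have EN: "E z = 0" if "z \<in> N" for z using RE_E[OF N(3,1) that] RE0 by simp
    show False
    proof (cases "2*K - 1 = 0")
      case False
      have "E z1 = - 2 * (2*K - 1)" unfolding E_def using z1(2) by simp
      thus False using EN[OF N(2)] False by simp
    next
      case True
      have freqQ: "frequently (\<lambda>z. Q z \<noteq> 0) (at z1)"
      proof (rule ccontr)
        assume "\<not> frequently (\<lambda>z. Q z \<noteq> 0) (at z1)"
        hence "eventually (\<lambda>z. Q z = 0) (at z1)" by (simp add: not_frequently)
        hence "frequently (\<lambda>z. Q z = 0) (at z1)" by (rule eventually_frequently[rotated]) simp
        hence "Q 0 = 0" using frequently_eq_meromorphic_imp_constant[OF _ nmQ] by blast
        thus False using Q0 by simp
      qed
      define D where "D = (\<lambda>z. 9*Q z*(deriv Q z)^2 - 2*(1 - (Q z)^2)*(4*(Q z)^2 - 3))"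
      have ED: "E z = Q z * D z" for z
      proof -
        have K: "2*K - 1 = 0" by fact
        have "E z = 9*(Q z)^2*(deriv Q z)^2 - 2*(1 - (Q z)^2)*(4*(Q z)^3 - 3*Q z + (2*K - 1))"
          unfolding E_def by (simp add: algebra_simps)
        also have "... = Q z * D z" unfolding K D_def by (simp add: algebra_simps power2_eq_square power3_eq_cube)
        finally show ?thesis .
      qed
      have "eventually (\<lambda>z. z \<in> N) (at z1)" using eventually_at_in_open'[OF N(1,2)] .
      hence "frequently (\<lambda>z. Q z \<noteq> 0 \<and> z \<in> N) (at z1)"
        using frequently_eventually_frequently[OF freqQ] by blast
      hence fD: "frequently (\<lambda>z. D z = 0) (at z1)"
        by (rule frequently_elim1) (use EN ED in force)
      have "deriv Q holomorphic_on N" using holomorphic_deriv N by blast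
      hence "D holomorphic_on N" unfolding D_def using N by (intro holomorphic_intros)
      hence "isCont D z1" using N holomorphic_on_imp_continuous_on continuous_on_eq_continuous_at by blast
      hence "D \<midarrow>z1\<rightarrow> D z1" by (rule isContD)
      moreover have "D z1 = 6" unfolding D_def using z1(2) by simp
      ultimately have "eventually (\<lambda>z. D z \<noteq> 0) (at z1)"
        using tendsto_imp_eventually_ne[of D 6 "at z1" 0] by simp
      thus False using fD by (simp add: frequently_def)
    qed
  qed
qed

lemma elliptic_affine:
  assumes "elliptic f"
  shows "elliptic (\<lambda>z. a * f z + b)"
  using assms unfolding elliptic_def by (auto intro!: meromorphic_intros)

theorem theorem11:
  fixes \<kappa> r :: real and \<phi> \<psi> :: "complex \<Rightarrow> complex"
  assumes "0 < \<kappa>" and "\<kappa> < 1"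
    and "0 < r"
    and "\<phi> holomorphic_on ball 0 r" and "\<phi> 0 = 0"
    and "\<And>u. u \<in> ball 0 r \<Longrightarrow> u_of_phi \<kappa> (\<phi> u) = u"
    and "\<psi> holomorphic_on ball 0 r" and "\<psi> 0 = 0"
    and "\<And>u. u \<in> ball 0 r \<Longrightarrow> sin (\<psi> u) = complex_of_real \<kappa> * sin (\<phi> u)"
  shows "\<not> (\<exists>f \<epsilon>. elliptic f \<and> 0 < \<epsilon> \<and> \<epsilon> \<le> r \<and> (\<forall>u\<in>ball 0 \<epsilon>. f u = (sin (\<phi> u))\<^sup>2)) \<and>
         \<not> (\<exists>f \<epsilon>. elliptic f \<and> 0 < \<epsilon> \<and> \<epsilon> \<le> r \<and> (\<forall>u\<in>ball 0 \<epsilon>. f u = (cos (\<phi> u))\<^sup>2)) \<and>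
         \<not> (\<exists>f \<epsilon>. elliptic f \<and> 0 < \<epsilon> \<and> \<epsilon> \<le> r \<and> (\<forall>u\<in>ball 0 \<epsilon>. f u = (cos (\<psi> u))\<^sup>2))"
proof (intro conjI notI)
  note M = main_S[OF assms(1-6)]
  {
    assume "\<exists>f \<epsilon>. elliptic f \<and> 0 < \<epsilon> \<and> \<epsilon> \<le> r \<and> (\<forall>u\<in>ball 0 \<epsilon>. f u = (sin (\<phi> u))\<^sup>2)"
    thus False using M by blast
  next
    assume "\<exists>f \<epsilon>. elliptic f \<and> 0 < \<epsilon> \<and> \<epsilon> \<le> r \<and> (\<forall>u\<in>ball 0 \<epsilon>. f u = (cos (\<phi> u))\<^sup>2)"
    then obtain f \<epsilon> where f: "elliptic f" "0 < \<epsilon>" "\<epsilon> \<le> r" "\<forall>u\<in>ball 0 \<epsilon>. f u = (cos (\<phi> u))\<^sup>2" by blast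
    have "elliptic (\<lambda>z. (-1) * f z + 1)" by (rule elliptic_affine[OF f(1)])
    moreover have "\<forall>u\<in>ball 0 \<epsilon>. (-1) * f u + 1 = (sin (\<phi> u))\<^sup>2"
    proof
      fix u :: complex assume "u \<in> ball 0 \<epsilon>"
      thus "(-1) * f u + 1 = (sin (\<phi> u))\<^sup>2" using f(4) sin_cos_squared_add[of "\<phi> u"]
        by (simp add: algebra_simps)
    qed
    ultimately show False using M f(2,3) by blast
  next
    assume "\<exists>f \<epsilon>. elliptic f \<and> 0 < \<epsilon> \<and> \<epsilon> \<le> r \<and> (\<forall>u\<in>ball 0 \<epsilon>. f u = (cos (\<psi> u))\<^sup>2)"
    then obtain f \<epsilon> where f: "elliptic f" "0 < \<epsilon>" "\<epsilon> \<le> r" "\<forall>u\<in>ball 0 \<epsilon>. f u = (cos (\<psi> u))\<^sup>2" by blast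
    define K where "K = (complex_of_real \<kappa>)^2"
    have Knz: "K \<noteq> 0" unfolding K_def using assms(1) by simp
    have "elliptic (\<lambda>z. (-1/K) * f z + 1/K)" by (rule elliptic_affine[OF f(1)])
    moreover have "\<forall>u\<in>ball 0 \<epsilon>. (-1/K) * f u + 1/K = (sin (\<phi> u))\<^sup>2"
    proof
      fix u :: complex assume u: "u \<in> ball 0 \<epsilon>"
      hence ur: "u \<in> ball 0 r" using f(3) by auto
      have "(-1/K) * f u + 1/K = (1 - (cos (\<psi> u))\<^sup>2) / K" using f(4) u Knz by (simp add: field_simps)
      also have "1 - (cos (\<psi> u))\<^sup>2 = (sin (\<psi> u))\<^sup>2" using sin_cos_squared_add[of "\<psi> u"]
        by (simp add: algebra_simps)
      also have "... = K * (sin (\<phi> u))\<^sup>2" unfolding assms(9)[OF ur] K_def by (simp add: power_mult_distrib)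
      finally show "(-1/K) * f u + 1/K = (sin (\<phi> u))\<^sup>2" using Knz by simp
    qed
    ultimately show False using M f(2,3) by blast
  }
qed

end
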